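(* Let $N\ge 1$, let $0\le \epsilon<1/2$, and let $H_N=\sum_{k=1}^N \frac1k$. Let $S\subseteq\{0,1\}^N$ be the set of non-decreasing bit strings $x=(x_0,\dots,x_{N-1})$ (i.e. $x_0\le x_1\le\dots\le x_{N-1}$) with $x_{N-1}=1$, and let $f(x)=\min\{0\le i<N : x_i=1\}$ (the ordered searching problem). Then every quantum query algorithm (in the model described in the context) that computes $f$ on $S$ with error probability at most $\epsilon$ uses at least $$\Big(1-2\sqrt{\epsilon(1-\epsilon)}\Big)\frac{1}{\pi}(H_N-1)$$ queries. In particular, every exact quantum algorithm ($\epsilon=0$) for this problem uses more than $\frac1\pi(\ln(N)-1)$ queries.
   Context: Quantum query model: the algorithm acts on a Hilbert space with orthonormal basis $\{|z;i\rangle : z,i \text{ non-negative integers}\}$. For an input $x\in\{0,1\}^N$ the oracle is the unitary $O_x|z;i\rangle=(-1)^{x_i}|z;i\rangle$ if $0\le i<N$ and $O_x|z;i\rangle=|z;i\rangle$ if $i\ge N$. A quantum algorithm with $T$ queries is a unitary of the form $(U O_x)^T U$ for a fixed unitary $U$ (independent of $x$), applied to the initial state $|0\rangle$; the final state is measured in the computational basis and a designated output register is read. The algorithm computes $f:S\to\{0,1\}^m$ with error probability at most $\epsilon$ if for every $x\in S$ the output read equals $f(x)$ with probability at least $1-\epsilon$; it is exact if $\epsilon=0$. *)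

theory Defs
  imports "HOL-Analysis.Analysis"
begin

text \<open>States: functions from basis labels (z,i) to complex amplitudes, square-summable.\<close>
type_synonym qstate = "nat \<times> nat \<Rightarrow> complex"

definition l2 :: "qstate set" where
  "l2 = {\<psi>. (\<lambda>b. (cmod (\<psi> b))\<^sup>2) summable_on UNIV}"

definition l2norm :: "qstate \<Rightarrow> real" where
  "l2norm \<psi> = sqrt (infsum (\<lambda>b. (cmod (\<psi> b))\<^sup>2) UNIV)"

definition is_unitary :: "(qstate \<Rightarrow> qstate) \<Rightarrow> bool" where
  "is_unitary U \<longleftrightarrow>
     U ` l2 = l2 \<and>
     (\<forall>\<psi>\<in>l2. \<forall>\<phi>\<in>l2. \<forall>a b. U (\<lambda>k. a * \<psi> k + b * \<phi> k) = (\<lambda>k. a * U \<psi> k + b * U \<phi> k)) \<and>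
     (\<forall>\<psi>\<in>l2. l2norm (U \<psi>) = l2norm \<psi>)"

text \<open>The phase query operator O_x; the bit string x is given by x i for i < N (x i = True means x_i = 1).\<close>
definition query_op :: "nat \<Rightarrow> (nat \<Rightarrow> bool) \<Rightarrow> qstate \<Rightarrow> qstate" where
  "query_op N x \<psi> = (\<lambda>(z, i). (if i < N \<and> x i then -1 else 1) * \<psi> (z, i))"

definition init_state :: qstate where
  "init_state = (\<lambda>b. if b = (0, 0) then 1 else 0)"

definition final_state :: "(qstate \<Rightarrow> qstate) \<Rightarrow> nat \<Rightarrow> nat \<Rightarrow> (nat \<Rightarrow> bool) \<Rightarrow> qstate" where
  "final_state U T N x = ((\<lambda>\<psi>. U (query_op N x \<psi>)) ^^ T) (U init_state)"

definition output_prob :: "(qstate \<Rightarrow> qstate) \<Rightarrow> (nat \<times> nat \<Rightarrow> nat) \<Rightarrow> nat \<Rightarrow> nat \<Rightarrow> (nat \<Rightarrow> bool) \<Rightarrow> nat \<Rightarrow> real" where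
  "output_prob U out T N x v = infsum (\<lambda>b. (cmod (final_state U T N x b))\<^sup>2) {b. out b = v}"

definition ordered_inputs :: "nat \<Rightarrow> (nat \<Rightarrow> bool) set" where
  "ordered_inputs N = {x. (\<forall>i j. i \<le> j \<and> j < N \<and> x i \<longrightarrow> x j) \<and> x (N - 1)}"

definition ordered_search :: "nat \<Rightarrow> (nat \<Rightarrow> bool) \<Rightarrow> nat" where
  "ordered_search N x = (LEAST i. i < N \<and> x i)"

end

theory Submission
  imports Defs
begin


lemma alg1: "0 < (s::real) \<Longrightarrow> 0 < d \<Longrightarrow> 2 / (d * (d * (s * 2)) + s * (s * (s * 2))) = 1 / (d * (d * s) + s * (s * s))"
proof -
  assume a: "0 < s" "0 < d"
  have e: "d * (d * (s * 2)) + s * (s * (s * 2)) = 2 * (d * (d * s) + s * (s * s))" by algebra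
  have h: "2 / (2 * X) = 1 / X" for X :: real by simp
  show ?thesis unfolding e h ..
qed

lemma alg2: "0 < (c::real) \<Longrightarrow> 0 < s \<Longrightarrow> 1 / (c * (s * (s * (s * 2))) + s * (s * (s * (s * (s * 2))))) +
        1 / (c * (c * s) + (s * (s * (s * (s * s))) + c * (s * (s * (s * 2))))) =
        (c + s * (s * 3)) / (c * (c * (s * (s * (s * 2)))) + (c * (s * (s * (s * (s * (s * 4))))) + s * (s * (s * (s * (s * (s * (s * 2))))))))"
proof -
  assume a: "0 < c" "0 < s"
  define q where "q = c + s * s"
  have q: "q > 0" using a unfolding q_def by (intro add_pos_pos mult_pos_pos)
  have e1: "c * (s * (s * (s * 2))) + s * (s * (s * (s * (s * 2)))) = 2 * s * s * s * q" by (simp add: q_def algebra_simps)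
  have e2: "c * (c * s) + (s * (s * (s * (s * s))) + c * (s * (s * (s * 2)))) = s * q * q" by (simp add: q_def algebra_simps)
  have e3: "c * (c * (s * (s * (s * 2)))) + (c * (s * (s * (s * (s * (s * 4))))) + s * (s * (s * (s * (s * (s * (s * 2))))))) = 2 * s * s * s * q * q" by (simp add: q_def algebra_simps)
  have e4: "c + s * (s * 3) = q + 2 * s * s" by (simp add: q_def)
  show ?thesis unfolding e1 e2 e3 e4 using a q by (simp add: field_simps)
qed

definition ff :: "real \<Rightarrow> real \<Rightarrow> real" where
  "ff c x = 1 / ((c + x) * sqrt x)"

definition fd :: "real \<Rightarrow> real \<Rightarrow> real" where
  "fd c x = - (1 / ((c + x)^2 * sqrt x)) - 1 / (2 * (c + x) * x * sqrt x)"

definition FF :: "real \<Rightarrow> real \<Rightarrow> real" where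
  "FF c x = (2 / sqrt c) * arctan (sqrt x / sqrt c)"

lemma ff_deriv:
  assumes "c > 0" "x > 0"
  shows "(ff c has_real_derivative fd c x) (at x)"
proof -
  have "((\<lambda>x. 1 / ((c + x) * sqrt x)) has_real_derivative
     - (sqrt x + (c + x) * (inverse (sqrt x) / 2)) / ((c + x) * sqrt x)^2) (at x)"
    using assms
    by (auto intro!: derivative_eq_intros simp: power2_eq_square)
  moreover have "- (sqrt x + (c + x) * (inverse (sqrt x) / 2)) / ((c + x) * sqrt x)^2 = fd c x"
  proof -
    obtain s where s: "s > 0" "x = s^2" using assms
      by (metis real_sqrt_gt_0_iff real_sqrt_pow2 less_le)
    have q: "sqrt x = s" using s by simp
    show ?thesis using assms s unfolding fd_def q
      by (simp add: field_simps power2_eq_square alg2)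
  qed
  ultimately show ?thesis unfolding ff_def by simp
qed

lemma fd_mono:
  assumes "c > 0" "0 < x" "x \<le> y"
  shows "fd c x \<le> fd c y"
proof -
  have a: "(c + x)^2 * sqrt x \<le> (c + y)^2 * sqrt y"
    using assms by (intro mult_mono power_mono) auto
  have b: "2 * (c + x) * x * sqrt x \<le> 2 * (c + y) * y * sqrt y"
    using assms by (intro mult_mono) auto
  have "1 / ((c + y)^2 * sqrt y) \<le> 1 / ((c + x)^2 * sqrt x)"
    using assms a by (intro divide_left_mono) auto
  moreover have "1 / (2 * (c + y) * y * sqrt y) \<le> 1 / (2 * (c + x) * x * sqrt x)"
    using assms b by (intro divide_left_mono) auto
  ultimately show ?thesis unfolding fd_def by linarith
qed

lemma ff_convex: "c > 0 \<Longrightarrow> convex_on {0<..} (ff c)"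
  by (rule convex_on_realI[where f' = "fd c"]) (auto intro: ff_deriv fd_mono)

lemma ff_mid:
  assumes "c > 0" "0 < h" "h < a"
  shows "2 * ff c a \<le> ff c (a + h) + ff c (a - h)"
proof -
  have "ff c ((1 - 1/2) *\<^sub>R (a + h) + (1/2) *\<^sub>R (a - h)) \<le> (1 - 1/2) * ff c (a + h) + (1/2) * ff c (a - h)"
    by (rule convex_onD[OF ff_convex]) (use assms in auto)
  moreover have "(1 - 1/2) *\<^sub>R (a + h) + (1/2) *\<^sub>R (a - h) = a" by (simp add: field_simps)
  ultimately show ?thesis by simp
qed

lemma FF_deriv:
  assumes "c > 0" "x > 0"
  shows "(FF c has_real_derivative ff c x) (at x)"
proof -
  have "(FF c has_real_derivative (2 / sqrt c) * (inverse (1 + (sqrt x / sqrt c)^2) * ((inverse (sqrt x) / 2) / sqrt c))) (at x)"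
    unfolding FF_def using assms
    apply (intro derivative_eq_intros)
    apply (rule refl | simp)+
    done
  moreover have "(2 / sqrt c) * (inverse (1 + (sqrt x / sqrt c)^2) * ((inverse (sqrt x) / 2) / sqrt c)) = ff c x"
  proof -
    obtain s where s: "s > 0" "x = s^2" using assms
      by (metis real_sqrt_gt_0_iff real_sqrt_pow2 less_le)
    obtain d where d: "d > 0" "c = d^2" using assms
      by (metis real_sqrt_gt_0_iff real_sqrt_pow2 less_le)
    have q: "sqrt x = s" "sqrt c = d" using s d by auto
    show ?thesis using s d unfolding ff_def q
      by (simp add: field_simps power2_eq_square alg1)
  qed
  ultimately show ?thesis by simp
qed

lemma FF_step:
  assumes "c > 0" "a \<ge> 1/2"
  shows "ff c a \<le> FF c (a + 1/2) - FF c (a - 1/2)"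
proof -
  define G where "G h = FF c (a + h) - FF c (a - h) - 2 * h * ff c a" for h
  have "G 0 \<le> G (1/2)"
  proof (rule DERIV_nonneg_imp_increasing_open[where f=G])
    fix h :: real assume h: "0 < h" "h < 1/2"
    have d1: "((\<lambda>h. FF c (a + h)) has_real_derivative ff c (a + h)) (at h)"
    proof -
      have "((\<lambda>h. a + h) has_real_derivative 1) (at h)" by (auto intro!: derivative_eq_intros)
      then show ?thesis using DERIV_chain2[where f="FF c" and g="\<lambda>h. a + h" and Db=1 and x=h and s=UNIV, OF FF_deriv[of c "a + h"]] h assms
        by auto
    qed
    have d2: "((\<lambda>h. FF c (a - h)) has_real_derivative ff c (a - h) * (-1)) (at h)"
    proof -
      have "((\<lambda>h. a - h) has_real_derivative -1) (at h)" by (auto intro!: derivative_eq_intros)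
      then show ?thesis using DERIV_chain2[where f="FF c" and g="\<lambda>h. a - h" and Db="-1" and x=h and s=UNIV, OF FF_deriv[of c "a - h"]] h assms
        by auto
    qed
    have "(G has_real_derivative ff c (a + h) - ff c (a - h) * (-1) - 2 * ff c a * 1) (at h)"
      unfolding G_def using d1 d2
      apply (intro derivative_intros)
      apply (auto intro!: derivative_eq_intros)?
      done
    moreover have "ff c (a + h) - ff c (a - h) * (-1) - 2 * ff c a * 1 \<ge> 0"
      using ff_mid[of c h a] h assms by simp
    ultimately show "\<exists>y. (G has_real_derivative y) (at h) \<and> y \<ge> 0" by blast
  next
    show "continuous_on {0..1/2} G" unfolding G_def FF_def
      by (intro continuous_intros) (use assms in auto)
  qed simp
  then show ?thesis unfolding G_def by simp
qed

lemma hilbert_row: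
  assumes "c > 0"
  shows "(\<Sum>m<M. 1 / ((c + (real m + 1/2)) * sqrt (real m + 1/2))) \<le> pi / sqrt c"
proof -
  have "(\<Sum>m<M. 1 / ((c + (real m + 1/2)) * sqrt (real m + 1/2))) \<le> (\<Sum>m<M. FF c (real (Suc m)) - FF c (real m))"
  proof (rule sum_mono)
    fix m assume "m \<in> {..<M}"
    have "ff c (real m + 1/2) \<le> FF c (real m + 1/2 + 1/2) - FF c (real m + 1/2 - 1/2)"
      by (rule FF_step) (use assms in auto)
    then show "1 / ((c + (real m + 1/2)) * sqrt (real m + 1/2)) \<le> FF c (real (Suc m)) - FF c (real m)"
      unfolding ff_def by simp
  qed
  also have "\<dots> = FF c (real M) - FF c 0"
    by (subst sum_lessThan_telescope) simp
  also have "\<dots> \<le> pi / sqrt c"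
  proof -
    have "arctan (sqrt (real M) / sqrt c) < pi / 2" by (rule arctan_ubound)
    then have "(2 / sqrt c) * arctan (sqrt (real M) / sqrt c) \<le> (2 / sqrt c) * (pi / 2)"
      using assms by (intro mult_left_mono) auto
    then show ?thesis unfolding FF_def by simp
  qed
  finally show ?thesis .
qed



lemma amgm: "r > 0 \<Longrightarrow> 2 * x * y \<le> r * x^2 + y^2 / r" for r x y :: real
proof -
  assume r: "r > 0"
  have "0 \<le> (r * x - y)^2 / r" using r by simp
  also have "(r * x - y)^2 / r = r * x^2 + y^2 / r - 2 * x * y"
    using r by (simp add: field_simps power2_eq_square)
  finally show ?thesis by simp
qed

lemma row1:
  assumes "a > 0"
  shows "(\<Sum>j\<in>{k<..<N}. sqrt a / sqrt (real j - real k - 1/2) / (a + (real j - real k - 1/2))) \<le> pi"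
proof -
  have "(\<Sum>j\<in>{k<..<N}. sqrt a / sqrt (real j - real k - 1/2) / (a + (real j - real k - 1/2)))
      = (\<Sum>m<N - Suc k. sqrt a * (1 / ((a + (real m + 1/2)) * sqrt (real m + 1/2))))"
    by (rule sum.reindex_bij_witness[where i = "\<lambda>m. m + Suc k" and j = "\<lambda>j. j - Suc k"])
       (auto simp: of_nat_diff algebra_simps)
  also have "\<dots> = sqrt a * (\<Sum>m<N - Suc k. 1 / ((a + (real m + 1/2)) * sqrt (real m + 1/2)))"
    by (simp add: sum_distrib_left)
  also have "\<dots> \<le> sqrt a * (pi / sqrt a)"
    by (intro mult_left_mono hilbert_row) (use assms in auto)
  also have "\<dots> = pi" using assms by simp
  finally show ?thesis .
qed

lemma row2:
  assumes "b > 0"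
  shows "(\<Sum>i\<in>{..k}. sqrt b / sqrt (real k - real i + 1/2) / ((real k - real i + 1/2) + b)) \<le> pi"
proof -
  have "(\<Sum>i\<in>{..k}. sqrt b / sqrt (real k - real i + 1/2) / ((real k - real i + 1/2) + b))
      = (\<Sum>m<Suc k. sqrt b * (1 / ((b + (real m + 1/2)) * sqrt (real m + 1/2))))"
    by (rule sum.reindex_bij_witness[where i = "\<lambda>m. k - m" and j = "\<lambda>i. k - i"])
       (auto simp: of_nat_diff algebra_simps)
  also have "\<dots> = sqrt b * (\<Sum>m<Suc k. 1 / ((b + (real m + 1/2)) * sqrt (real m + 1/2)))"
    by (simp only: sum_distrib_left)
  also have "\<dots> \<le> sqrt b * (pi / sqrt b)"
    by (intro mult_left_mono hilbert_row) (use assms in auto)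
  also have "\<dots> = pi" using assms by simp
  finally show ?thesis .
qed

lemma hilbert_k:
  fixes x :: "nat \<Rightarrow> real"
  assumes "k < N"
  shows "(\<Sum>i\<in>{..k}. \<Sum>j\<in>{k<..<N}. 2 * x i * x j / (real j - real i)) \<le> pi * (\<Sum>i<N. (x i)^2)"
proof -
  define A where "A i = real k - real i + 1/2" for i
  define B where "B j = real j - real k - 1/2" for j
  define r where "r i j = sqrt (A i) / sqrt (B j)" for i j
  have Apos: "i \<in> {..k} \<Longrightarrow> A i > 0" for i unfolding A_def by auto
  have Bpos: "j \<in> {k<..<N} \<Longrightarrow> B j > 0" for j unfolding B_def by auto
  have AB: "real j - real i = A i + B j" for i j unfolding A_def B_def by simp
  have "(\<Sum>i\<in>{..k}. \<Sum>j\<in>{k<..<N}. 2 * x i * x j / (real j - real i))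
      \<le> (\<Sum>i\<in>{..k}. \<Sum>j\<in>{k<..<N}. (r i j * (x i)^2 + (x j)^2 / r i j) / (A i + B j))"
  proof (intro sum_mono)
    fix i j assume i: "i \<in> {..k}" and j: "j \<in> {k<..<N}"
    have rp: "r i j > 0" unfolding r_def using Apos[OF i] Bpos[OF j] by simp
    have "A i + B j > 0" using Apos[OF i] Bpos[OF j] by simp
    then show "2 * x i * x j / (real j - real i) \<le> (r i j * (x i)^2 + (x j)^2 / r i j) / (A i + B j)"
      unfolding AB using amgm[OF rp] by (intro divide_right_mono) auto
  qed
  also have "\<dots> = (\<Sum>i\<in>{..k}. (x i)^2 * (\<Sum>j\<in>{k<..<N}. r i j / (A i + B j)))
      + (\<Sum>j\<in>{k<..<N}. (x j)^2 * (\<Sum>i\<in>{..k}. (1 / r i j) / (A i + B j)))"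
    by (simp add: add_divide_distrib sum.distrib sum_distrib_left sum.swap[of _ "{..k}"] algebra_simps)
  also have "\<dots> \<le> (\<Sum>i\<in>{..k}. (x i)^2 * pi) + (\<Sum>j\<in>{k<..<N}. (x j)^2 * pi)"
  proof (intro add_mono sum_mono mult_left_mono)
    fix i assume i: "i \<in> {..k}"
    show "(\<Sum>j\<in>{k<..<N}. r i j / (A i + B j)) \<le> pi"
      using row1[OF Apos[OF i], of k N] unfolding r_def B_def by simp
  next
    fix j assume j: "j \<in> {k<..<N}"
    have "(\<Sum>i\<in>{..k}. (1 / r i j) / (A i + B j)) = (\<Sum>i\<in>{..k}. sqrt (B j) / sqrt (A i) / (A i + B j))"
      unfolding r_def by simp
    then show "(\<Sum>i\<in>{..k}. (1 / r i j) / (A i + B j)) \<le> pi"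
      using row2[OF Bpos[OF j], of k] unfolding A_def by simp
  qed auto
  also have "\<dots> = pi * (\<Sum>i<N. (x i)^2)"
  proof -
    have "{..<N} = {..k} \<union> {k<..<N}" using assms by auto
    then have "(\<Sum>i<N. (x i)^2) = (\<Sum>i\<in>{..k}. (x i)^2) + (\<Sum>i\<in>{k<..<N}. (x i)^2)"
      by (simp add: sum.union_disjoint ivl_disj_int)
    then show ?thesis by (simp add: sum_distrib_left sum_distrib_right algebra_simps)
  qed
  finally show ?thesis .
qed



definition nsq :: "qstate \<Rightarrow> real" where
  "nsq \<psi> = infsum (\<lambda>b. (cmod (\<psi> b))\<^sup>2) UNIV"

definition Rf :: "qstate \<Rightarrow> qstate \<Rightarrow> nat \<times> nat \<Rightarrow> real" where
  "Rf \<psi> \<phi> b = Re (cnj (\<psi> b) * \<phi> b)"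

definition rip :: "qstate \<Rightarrow> qstate \<Rightarrow> real" where
  "rip \<psi> \<phi> = infsum (Rf \<psi> \<phi>) UNIV"

lemma l2_summable: "\<psi> \<in> l2 \<Longrightarrow> (\<lambda>b. (cmod (\<psi> b))\<^sup>2) summable_on A"
  unfolding l2_def by (auto intro: summable_on_subset)

lemma Rf_bound: "\<bar>Rf \<psi> \<phi> b\<bar> \<le> cmod (\<psi> b) * cmod (\<phi> b)"
  unfolding Rf_def by (metis abs_Re_le_cmod complex_mod_cnj norm_mult)

lemma Rf_bound2: "\<bar>Rf \<psi> \<phi> b\<bar> \<le> ((cmod (\<psi> b))\<^sup>2 + (cmod (\<phi> b))\<^sup>2) / 2"
proof -
  have "2 * cmod (\<psi> b) * cmod (\<phi> b) \<le> 1 * (cmod (\<psi> b))\<^sup>2 + (cmod (\<phi> b))\<^sup>2 / 1"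
    by (rule amgm) simp
  then show ?thesis using Rf_bound[of \<psi> \<phi> b] by simp
qed

lemma real_summable_cmp:
  fixes f g :: "'a \<Rightarrow> real"
  assumes "g summable_on A" "\<And>x. x \<in> A \<Longrightarrow> \<bar>f x\<bar> \<le> g x"
  shows "f summable_on A"
proof -
  have p: "(\<lambda>x. max (f x) 0) summable_on A"
    by (rule summable_on_comparison_test[OF assms(1)]) (use assms(2) in force)+
  have n: "(\<lambda>x. - max (- f x) 0) summable_on A"
    unfolding summable_on_uminus
    by (rule summable_on_comparison_test[OF assms(1)]) (use assms(2) in force)+
  have "(\<lambda>x. max (f x) 0 + - max (- f x) 0) summable_on A"
    using p n by (rule summable_on_add)
  moreover have "(\<lambda>x. max (f x) 0 + - max (- f x) 0) = f" by (auto simp: fun_eq_iff max_def)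
  ultimately show ?thesis by simp
qed

lemma Rf_summable: "\<psi> \<in> l2 \<Longrightarrow> \<phi> \<in> l2 \<Longrightarrow> Rf \<psi> \<phi> summable_on A"
proof (rule real_summable_cmp[OF _ Rf_bound2])
  assume "\<psi> \<in> l2" "\<phi> \<in> l2"
  then show "(\<lambda>b. ((cmod (\<psi> b))\<^sup>2 + (cmod (\<phi> b))\<^sup>2) / 2) summable_on A"
  proof -
    have "(\<lambda>b. (cmod (\<psi> b))\<^sup>2 * (1/2) + (cmod (\<phi> b))\<^sup>2 * (1/2)) summable_on A"
      using \<open>\<psi> \<in> l2\<close> \<open>\<phi> \<in> l2\<close> l2_summable by (intro summable_on_add summable_on_cmult_left) auto
    then show ?thesis by (simp add: add_divide_distrib)
  qed
qed

lemma cmod_add_sq: "(cmod (a + b))\<^sup>2 = (cmod a)\<^sup>2 + (cmod b)\<^sup>2 + 2 * Re (cnj a * b)"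
  by (simp only: cmod_power2) (simp add: power2_eq_square algebra_simps)

lemma l2_add: "\<psi> \<in> l2 \<Longrightarrow> \<phi> \<in> l2 \<Longrightarrow> (\<lambda>k. \<psi> k + \<phi> k) \<in> l2"
proof -
  assume a: "\<psi> \<in> l2" "\<phi> \<in> l2"
  have "(\<lambda>b. (cmod (\<psi> b + \<phi> b))\<^sup>2) summable_on UNIV"
  proof (rule real_summable_cmp)
    show "(\<lambda>b. 2 * (cmod (\<psi> b))\<^sup>2 + 2 * (cmod (\<phi> b))\<^sup>2) summable_on UNIV"
      using a l2_summable by (auto intro!: summable_on_add summable_on_cmult_right)
  next
    fix b
    have e: "(cmod (\<psi> b + \<phi> b))\<^sup>2 = (cmod (\<psi> b))\<^sup>2 + (cmod (\<phi> b))\<^sup>2 + 2 * Rf \<psi> \<phi> b"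
      unfolding Rf_def by (rule cmod_add_sq)
    have "Rf \<psi> \<phi> b \<le> ((cmod (\<psi> b))\<^sup>2 + (cmod (\<phi> b))\<^sup>2) / 2"
      using Rf_bound2[of \<psi> \<phi> b] by (rule abs_le_D1)
    moreover have "\<bar>(cmod (\<psi> b + \<phi> b))\<^sup>2\<bar> = (cmod (\<psi> b + \<phi> b))\<^sup>2" by simp
    ultimately show "\<bar>(cmod (\<psi> b + \<phi> b))\<^sup>2\<bar> \<le> 2 * (cmod (\<psi> b))\<^sup>2 + 2 * (cmod (\<phi> b))\<^sup>2"
      using e by argo
  qed
  then show ?thesis unfolding l2_def by simp
qed

lemma nsq_l2norm: "nsq \<psi> = (l2norm \<psi>)\<^sup>2"
  unfolding nsq_def l2norm_def by (simp add: infsum_nonneg)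

lemma nsq_nonneg: "nsq \<psi> \<ge> 0"
  unfolding nsq_def by (simp add: infsum_nonneg)

lemma rip_polar: "\<psi> \<in> l2 \<Longrightarrow> \<phi> \<in> l2 \<Longrightarrow> rip \<psi> \<phi> = (nsq (\<lambda>k. \<psi> k + \<phi> k) - nsq \<psi> - nsq \<phi>) / 2"
proof -
  assume a: "\<psi> \<in> l2" "\<phi> \<in> l2"
  have "nsq (\<lambda>k. \<psi> k + \<phi> k) = infsum (\<lambda>b. ((cmod (\<psi> b))\<^sup>2 + (cmod (\<phi> b))\<^sup>2) + 2 * Rf \<psi> \<phi> b) UNIV"
    unfolding nsq_def Rf_def by (simp add: cmod_add_sq)
  also have "\<dots> = nsq \<psi> + nsq \<phi> + 2 * rip \<psi> \<phi>"
    unfolding nsq_def rip_def using a l2_summable Rf_summable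
    by (subst infsum_add, auto intro!: summable_on_add summable_on_cmult_right simp: infsum_add infsum_cmult_right)
  finally show ?thesis by simp
qed

lemma unitary_l2: "is_unitary U \<Longrightarrow> \<psi> \<in> l2 \<Longrightarrow> U \<psi> \<in> l2"
  unfolding is_unitary_def by blast

lemma unitary_nsq: "is_unitary U \<Longrightarrow> \<psi> \<in> l2 \<Longrightarrow> nsq (U \<psi>) = nsq \<psi>"
  unfolding is_unitary_def nsq_l2norm by simp

lemma unitary_rip:
  assumes "is_unitary U" "\<psi> \<in> l2" "\<phi> \<in> l2"
  shows "rip (U \<psi>) (U \<phi>) = rip \<psi> \<phi>"
proof -
  have lin: "U (\<lambda>k. 1 * \<psi> k + 1 * \<phi> k) = (\<lambda>k. 1 * U \<psi> k + 1 * U \<phi> k)"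
    using assms unfolding is_unitary_def by blast
  then have lin': "U (\<lambda>k. \<psi> k + \<phi> k) = (\<lambda>k. U \<psi> k + U \<phi> k)" by simp
  show ?thesis
    using assms
    by (simp add: rip_polar unitary_l2 unitary_nsq l2_add flip: lin')
qed

lemma query_cmod: "cmod (query_op N x \<psi> b) = cmod (\<psi> b)"
  unfolding query_op_def by (cases b) (auto simp: norm_mult)

lemma query_l2: "\<psi> \<in> l2 \<Longrightarrow> query_op N x \<psi> \<in> l2"
  unfolding l2_def by (simp add: query_cmod)

lemma query_nsq: "nsq (query_op N x \<psi>) = nsq \<psi>"
  unfolding nsq_def by (simp add: query_cmod)

lemma init_l2: "init_state \<in> l2" and init_nsq: "nsq init_state = 1"
proof -
  have e: "(\<lambda>b. (cmod (init_state b))\<^sup>2) = (\<lambda>b. if b = (0,0) then 1 else 0)"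
    unfolding init_state_def by auto
  have "(\<lambda>b::nat\<times>nat. if b = (0,0) then 1 else 0 :: real) summable_on UNIV"
    by (rule summable_on_cong_neutral[where S="{(0,0)}" and f="\<lambda>_. 1", THEN iffD1]) auto
  then show "init_state \<in> l2" unfolding l2_def mem_Collect_eq e by simp
  have "infsum (\<lambda>b::nat\<times>nat. if b = (0,0) then 1 else 0 :: real) UNIV = infsum (\<lambda>_. 1) {(0::nat,0::nat)}"
    by (rule infsum_cong_neutral) auto
  then show "nsq init_state = 1" unfolding nsq_def e by simp
qed

lemma rip_self: "rip \<psi> \<psi> = nsq \<psi>"
proof -
  have "Re (cnj z * z) = (cmod z)\<^sup>2" for z by (subst cmod_power2) (simp add: power2_eq_square)
  then show ?thesis unfolding rip_def nsq_def Rf_def by simp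
qed

lemma infsum_sum_fin:
  fixes f :: "'i \<Rightarrow> 'a \<Rightarrow> real"
  assumes "finite I" "\<And>i. i \<in> I \<Longrightarrow> f i summable_on A"
  shows "(\<lambda>b. \<Sum>i\<in>I. f i b) summable_on A \<and> infsum (\<lambda>b. \<Sum>i\<in>I. f i b) A = (\<Sum>i\<in>I. infsum (f i) A)"
  using assms
proof (induction I rule: finite_induct)
  case empty then show ?case by simp
next
  case (insert x F)
  then show ?case by (simp add: infsum_add summable_on_add)
qed

lemma infsum_diff_real:
  fixes f g :: "'a \<Rightarrow> real"
  assumes "f summable_on A" "g summable_on A"
  shows "(\<lambda>b. f b - g b) summable_on A \<and> infsum (\<lambda>b. f b - g b) A = infsum f A - infsum g A"
proof -
  have "(\<lambda>b. - g b) summable_on A" using assms(2) by (simp add: summable_on_uminus)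
  then have "(\<lambda>b. f b + - g b) summable_on A" using assms(1) by (intro summable_on_add)
  moreover have "infsum (\<lambda>b. f b + - g b) A = infsum f A + infsum (\<lambda>b. - g b) A"
    using assms(1) \<open>(\<lambda>b. - g b) summable_on A\<close> by (rule infsum_add)
  ultimately show ?thesis by (simp add: infsum_uminus)
qed



definition inp :: "nat \<Rightarrow> nat \<Rightarrow> bool" where
  "inp i = (\<lambda>k. i \<le> k)"

definition st :: "(qstate \<Rightarrow> qstate) \<Rightarrow> nat \<Rightarrow> nat \<Rightarrow> nat \<Rightarrow> qstate" where
  "st U N i t = ((\<lambda>\<psi>. U (query_op N (inp i) \<psi>)) ^^ t) (U init_state)"

lemma st_Suc: "st U N i (Suc t) = U (query_op N (inp i) (st U N i t))"
  unfolding st_def by simp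

lemma st_0: "st U N i 0 = U init_state"
  unfolding st_def by simp

lemma st_l2: "is_unitary U \<Longrightarrow> st U N i t \<in> l2 \<and> nsq (st U N i t) = 1"
proof (induction t)
  case 0 then show ?case using init_l2 init_nsq by (simp add: st_0 unitary_l2 unitary_nsq)
next
  case (Suc t) then show ?case
    by (simp add: st_Suc unitary_l2 unitary_nsq query_l2 query_nsq)
qed

lemma reduce_sum:
  fixes F :: "nat \<Rightarrow> nat \<Rightarrow> real"
  assumes "k < N"
  shows "(\<Sum>i<N. \<Sum>j\<in>{i<..<N}. if i \<le> k \<and> k < j then F i j else 0) = (\<Sum>i\<in>{..k}. \<Sum>j\<in>{k<..<N}. F i j)"
proof -
  have "(\<Sum>i<N. \<Sum>j\<in>{i<..<N}. if i \<le> k \<and> k < j then F i j else 0)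
      = (\<Sum>i<N. if i \<le> k then (\<Sum>j\<in>{k<..<N}. F i j) else 0)"
  proof (rule sum.cong[OF refl])
    fix i assume "i \<in> {..<N}"
    show "(\<Sum>j\<in>{i<..<N}. if i \<le> k \<and> k < j then F i j else 0) = (if i \<le> k then (\<Sum>j\<in>{k<..<N}. F i j) else 0)"
    proof (cases "i \<le> k")
      case True
      have "(\<Sum>j\<in>{i<..<N}. if i \<le> k \<and> k < j then F i j else 0) = (\<Sum>j\<in>{i<..<N}. if k < j then F i j else 0)"
        using True by simp
      also have "\<dots> = (\<Sum>j\<in>{j\<in>{i<..<N}. k < j}. F i j)"
        by (rule sum.inter_filter[symmetric]) simp
      also have "{j\<in>{i<..<N}. k < j} = {k<..<N}" using True by auto
      finally show ?thesis using True by simp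
    qed simp
  qed
  also have "\<dots> = (\<Sum>i\<in>{i\<in>{..<N}. i \<le> k}. (\<Sum>j\<in>{k<..<N}. F i j))"
    by (rule sum.inter_filter[symmetric]) simp
  also have "{i\<in>{..<N}. i \<le> k} = {..k}" using assms by auto
  finally show ?thesis .
qed

lemma query_Rf:
  "Rf (query_op N (inp i) \<psi>) (query_op N (inp j) \<phi>) (z, k)
   = (if k < N \<and> i \<le> k then -1 else 1) * (if k < N \<and> j \<le> k then -1 else 1) * Rf \<psi> \<phi> (z, k)"
  unfolding Rf_def query_op_def inp_def by auto

lemma pointwise_step:
  fixes \<psi> :: "nat \<Rightarrow> qstate"
  shows "\<bar>\<Sum>i<N. \<Sum>j\<in>{i<..<N}. (Rf (query_op N (inp i) (\<psi> i)) (query_op N (inp j) (\<psi> j)) b - Rf (\<psi> i) (\<psi> j) b) / (real j - real i)\<bar>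
     \<le> pi * (\<Sum>i<N. (cmod (\<psi> i b))\<^sup>2)"
proof -
  obtain z k where b: "b = (z, k)" by (cases b)
  define x where "x i = cmod (\<psi> i b)" for i
  have "\<bar>\<Sum>i<N. \<Sum>j\<in>{i<..<N}. (Rf (query_op N (inp i) (\<psi> i)) (query_op N (inp j) (\<psi> j)) b - Rf (\<psi> i) (\<psi> j) b) / (real j - real i)\<bar>
     \<le> (\<Sum>i<N. \<Sum>j\<in>{i<..<N}. \<bar>(Rf (query_op N (inp i) (\<psi> i)) (query_op N (inp j) (\<psi> j)) b - Rf (\<psi> i) (\<psi> j) b) / (real j - real i)\<bar>)"
    by (rule order_trans[OF sum_abs]) (intro sum_mono sum_abs)
  also have "\<dots> \<le> (\<Sum>i<N. \<Sum>j\<in>{i<..<N}. if i \<le> k \<and> k < j \<and> k < N then 2 * x i * x j / (real j - real i) else 0)"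
  proof (intro sum_mono)
    fix i j assume i: "i \<in> {..<N}" and j: "j \<in> {i<..<N}"
    have ji: "real j - real i > 0" using j by auto
    have R: "\<bar>Rf (\<psi> i) (\<psi> j) b\<bar> \<le> x i * x j" unfolding x_def by (rule Rf_bound)
    show "\<bar>(Rf (query_op N (inp i) (\<psi> i)) (query_op N (inp j) (\<psi> j)) b - Rf (\<psi> i) (\<psi> j) b) / (real j - real i)\<bar>
        \<le> (if i \<le> k \<and> k < j \<and> k < N then 2 * x i * x j / (real j - real i) else 0)"
    proof (cases "i \<le> k \<and> k < j \<and> k < N")
      case True
      then have "Rf (query_op N (inp i) (\<psi> i)) (query_op N (inp j) (\<psi> j)) b - Rf (\<psi> i) (\<psi> j) b = - 2 * Rf (\<psi> i) (\<psi> j) b"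
        unfolding b query_Rf by simp
      then show ?thesis using True R ji by (simp add: abs_divide abs_mult divide_right_mono)
    next
      case False
      then have "Rf (query_op N (inp i) (\<psi> i)) (query_op N (inp j) (\<psi> j)) b - Rf (\<psi> i) (\<psi> j) b = 0"
        using j unfolding b query_Rf by auto
      then show ?thesis using False by (simp only: if_False)
    qed
  qed
  also have "\<dots> \<le> pi * (\<Sum>i<N. (x i)\<^sup>2)"
  proof (cases "k < N")
    case True
    then have "(\<Sum>i<N. \<Sum>j\<in>{i<..<N}. if i \<le> k \<and> k < j \<and> k < N then 2 * x i * x j / (real j - real i) else 0)
        = (\<Sum>i\<in>{..k}. \<Sum>j\<in>{k<..<N}. 2 * x i * x j / (real j - real i))"
      using reduce_sum[OF True, of "\<lambda>i j. 2 * x i * x j / (real j - real i)"] by simp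
    also have "\<dots> \<le> pi * (\<Sum>i<N. (x i)\<^sup>2)" by (rule hilbert_k[OF True])
    finally show ?thesis .
  next
    case False
    then show ?thesis by (simp add: sum_nonneg)
  qed
  finally show ?thesis unfolding x_def .
qed



definition W :: "(qstate \<Rightarrow> qstate) \<Rightarrow> nat \<Rightarrow> nat \<Rightarrow> real" where
  "W U N t = (\<Sum>i<N. \<Sum>j\<in>{i<..<N}. rip (st U N i t) (st U N j t) / (real j - real i))"

lemma infsum_abs_le:
  fixes f g :: "'a \<Rightarrow> real"
  assumes "f summable_on A" "g summable_on A" "\<And>x. x \<in> A \<Longrightarrow> \<bar>f x\<bar> \<le> g x"
  shows "\<bar>infsum f A\<bar> \<le> infsum g A"
proof -
  have "infsum f A \<le> infsum g A"
    by (rule infsum_mono[OF assms(1,2)]) (use assms(3) in force)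
  moreover have "infsum (\<lambda>x. - f x) A \<le> infsum g A"
  proof (rule infsum_mono)
    show "(\<lambda>x. - f x) summable_on A" using assms(1) by (simp add: summable_on_uminus)
    show "- f x \<le> g x" if "x \<in> A" for x using abs_le_D2[OF assms(3)[OF that]] .
  qed (rule assms(2))
  ultimately show ?thesis by (simp add: infsum_uminus)
qed

lemma W_step:
  assumes U: "is_unitary U"
  shows "\<bar>W U N (Suc t) - W U N t\<bar> \<le> pi * real N"
proof -
  define \<psi> where "\<psi> i = st U N i t" for i
  define Q where "Q i = query_op N (inp i) (\<psi> i)" for i
  have pl2: "\<psi> i \<in> l2" and pn: "nsq (\<psi> i) = 1" for i unfolding \<psi>_def using st_l2[OF U] by auto
  have ql2: "Q i \<in> l2" for i unfolding Q_def using pl2 by (rule query_l2)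
  have WS: "W U N (Suc t) = (\<Sum>i<N. \<Sum>j\<in>{i<..<N}. rip (Q i) (Q j) / (real j - real i))"
    unfolding W_def st_Suc Q_def \<psi>_def using U ql2 by (simp add: unitary_rip Q_def \<psi>_def)
  have WT: "W U N t = (\<Sum>i<N. \<Sum>j\<in>{i<..<N}. rip (\<psi> i) (\<psi> j) / (real j - real i))"
    unfolding W_def \<psi>_def by simp
  define h where "h i j b = (Rf (Q i) (Q j) b - Rf (\<psi> i) (\<psi> j) b) * (1 / (real j - real i))" for i j b
  have hs: "h i j summable_on UNIV \<and> infsum (h i j) UNIV = (rip (Q i) (Q j) - rip (\<psi> i) (\<psi> j)) * (1 / (real j - real i))" for i j
  proof -
    have d: "(\<lambda>b. Rf (Q i) (Q j) b - Rf (\<psi> i) (\<psi> j) b) summable_on UNIV \<and>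
      infsum (\<lambda>b. Rf (Q i) (Q j) b - Rf (\<psi> i) (\<psi> j) b) UNIV = rip (Q i) (Q j) - rip (\<psi> i) (\<psi> j)"
      unfolding rip_def by (intro infsum_diff_real Rf_summable ql2 pl2)
    have s: "(\<lambda>b. (Rf (Q i) (Q j) b - Rf (\<psi> i) (\<psi> j) b) * (1 / (real j - real i))) summable_on UNIV"
      using summable_on_cmult_left[OF conjunct1[OF d]] .
    have e: "infsum (\<lambda>b. (Rf (Q i) (Q j) b - Rf (\<psi> i) (\<psi> j) b) * (1 / (real j - real i))) UNIV
       = infsum (\<lambda>b. Rf (Q i) (Q j) b - Rf (\<psi> i) (\<psi> j) b) UNIV * (1 / (real j - real i))"
      by (rule infsum_cmult_left) (use d in blast)
    show ?thesis unfolding h_def using s e d by simp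
  qed
  define D where "D b = (\<Sum>i<N. \<Sum>j\<in>{i<..<N}. h i j b)" for b
  have inner: "(\<lambda>b. \<Sum>j\<in>{i<..<N}. h i j b) summable_on UNIV \<and>
      infsum (\<lambda>b. \<Sum>j\<in>{i<..<N}. h i j b) UNIV = (\<Sum>j\<in>{i<..<N}. infsum (h i j) UNIV)" for i
    by (rule infsum_sum_fin) (use hs in auto)
  have Ds: "D summable_on UNIV \<and> infsum D UNIV = (\<Sum>i<N. \<Sum>j\<in>{i<..<N}. infsum (h i j) UNIV)"
    unfolding D_def using infsum_sum_fin[of "{..<N}" "\<lambda>i b. \<Sum>j\<in>{i<..<N}. h i j b" UNIV] inner by auto
  have diff: "W U N (Suc t) - W U N t = infsum D UNIV"
    unfolding WS WT conjunct2[OF Ds] using hs by (simp add: sum_subtractf[symmetric] diff_divide_distrib)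
  define g where "g b = pi * (\<Sum>i<N. (cmod (\<psi> i b))\<^sup>2)" for b
  have gi: "(\<lambda>b. \<Sum>i<N. (cmod (\<psi> i b))\<^sup>2) summable_on UNIV \<and>
      infsum (\<lambda>b. \<Sum>i<N. (cmod (\<psi> i b))\<^sup>2) UNIV = (\<Sum>i<N. nsq (\<psi> i))"
    unfolding nsq_def by (rule infsum_sum_fin) (use pl2 l2_summable in auto)
  have gs: "g summable_on UNIV" "infsum g UNIV = pi * real N"
    unfolding g_def using gi pn by (auto intro: summable_on_cmult_right simp: infsum_cmult_right)
  have "\<bar>D b\<bar> \<le> g b" for b
    using pointwise_step[of N \<psi> b] unfolding D_def h_def g_def Q_def by simp
  then have "\<bar>infsum D UNIV\<bar> \<le> infsum g UNIV"
    using Ds gs by (intro infsum_abs_le) auto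
  then show ?thesis unfolding diff gs by simp
qed



lemma ind_summable:
  fixes f :: "'a \<Rightarrow> real"
  assumes "f summable_on A"
  shows "(\<lambda>b. if b \<in> A then f b else 0) summable_on UNIV \<and> infsum (\<lambda>b. if b \<in> A then f b else 0) UNIV = infsum f A"
proof
  show "(\<lambda>b. if b \<in> A then f b else 0) summable_on UNIV"
    by (rule summable_on_cong_neutral[THEN iffD1, OF _ _ _ assms]) auto
  show "infsum (\<lambda>b. if b \<in> A then f b else 0) UNIV = infsum f A"
    by (rule infsum_cong_neutral) auto
qed

lemma final_bound_t:
  assumes l: "\<psi> \<in> l2" "\<phi> \<in> l2" and n: "nsq \<psi> = 1" "nsq \<phi> = 1" and AB: "A \<inter> B = {}"
    and pa: "infsum (\<lambda>b. (cmod (\<psi> b))\<^sup>2) A \<ge> 1 - \<epsilon>"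
    and pb: "infsum (\<lambda>b. (cmod (\<phi> b))\<^sup>2) B \<ge> 1 - \<epsilon>"
    and e: "0 \<le> \<epsilon>" and t: "0 < t" "t \<le> 1"
  shows "\<bar>rip \<psi> \<phi>\<bar> \<le> \<epsilon> / t + t * (1 - \<epsilon>)"
proof -
  define s where "s = 1 / t"
  have tt: "t * t \<le> 1 * 1" using t by (intro mult_mono) auto
  have ts: "t \<le> s" "s > 0" using t tt unfolding s_def by (auto simp: field_simps)
  define P where "P b = (cmod (\<psi> b))\<^sup>2" for b
  define F where "F b = (cmod (\<phi> b))\<^sup>2" for b
  define a where "a = infsum P A"
  define a' where "a' = infsum F A"
  have Ps: "P summable_on X" and Fs: "F summable_on X" for X
    unfolding P_def F_def using l l2_summable by auto
  have PA: "(\<lambda>b. if b \<in> A then P b else 0) summable_on UNIV" "infsum (\<lambda>b. if b \<in> A then P b else 0) UNIV = a"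
    using ind_summable[OF Ps[of A]] unfolding a_def by auto
  have FA: "(\<lambda>b. if b \<in> A then F b else 0) summable_on UNIV" "infsum (\<lambda>b. if b \<in> A then F b else 0) UNIV = a'"
    using ind_summable[OF Fs[of A]] unfolding a'_def by auto
  have nP: "infsum P UNIV = 1" and nF: "infsum F UNIV = 1" using n unfolding nsq_def P_def F_def by auto
  define G0 where "G0 b = s * P b + (t - s) * (if b \<in> A then P b else 0) + (1/s) * F b + (1/t - 1/s) * (if b \<in> A then F b else 0)" for b
  define G where "G b = G0 b / 2" for b
  have s1: "(\<lambda>b. s * P b) summable_on UNIV" using Ps by (rule summable_on_cmult_right)
  have s2: "(\<lambda>b. (t - s) * (if b \<in> A then P b else 0)) summable_on UNIV" using PA(1) by (rule summable_on_cmult_right)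
  have s3: "(\<lambda>b. (1/s) * F b) summable_on UNIV" using Fs by (rule summable_on_cmult_right)
  have s4: "(\<lambda>b. (1/t - 1/s) * (if b \<in> A then F b else 0)) summable_on UNIV" using FA(1) by (rule summable_on_cmult_right)
  have s12: "(\<lambda>b. s * P b + (t - s) * (if b \<in> A then P b else 0)) summable_on UNIV"
    using s1 s2 by (rule summable_on_add)
  have s123: "(\<lambda>b. s * P b + (t - s) * (if b \<in> A then P b else 0) + (1/s) * F b) summable_on UNIV"
    using s12 s3 by (rule summable_on_add)
  have G0s: "G0 summable_on UNIV" unfolding G0_def using s123 s4 by (rule summable_on_add)
  have G0v: "infsum G0 UNIV = s + (t - s) * a + 1/s + (1/t - 1/s) * a'"
  proof -
    have i1: "infsum (\<lambda>b. s * P b) UNIV = s" using infsum_cmult_right[of s P UNIV] nP Ps by simp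
    have i3: "infsum (\<lambda>b. F b / s) UNIV = 1 / s" using infsum_cmult_left[of "1/s" F UNIV] nF Fs by simp
    show ?thesis unfolding G0_def using s1 s2 s3 s4 s12 s123 PA FA i1 i3
      by (simp add: infsum_add infsum_cmult_right)
  qed
  have Gs: "G summable_on UNIV"
    using summable_on_cmult_left[OF G0s, of "1/2"] unfolding G_def by simp
  have Gv: "infsum G UNIV = (s + (t - s) * a + 1/s + (1/t - 1/s) * a') / 2"
    using infsum_cmult_left[of "1/2" G0 UNIV] G0s G0v unfolding G_def by simp
  have "\<bar>rip \<psi> \<phi>\<bar> \<le> infsum G UNIV"
    unfolding rip_def
  proof (rule infsum_abs_le[OF Rf_summable[OF l] Gs])
    fix b :: "nat \<times> nat"
    define T where "T = (if b \<in> A then t else s)"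
    have T: "T > 0" unfolding T_def using t ts by auto
    have "\<bar>Rf \<psi> \<phi> b\<bar> \<le> cmod (\<psi> b) * cmod (\<phi> b)" by (rule Rf_bound)
    also have "\<dots> \<le> (T * P b + F b / T) / 2"
      using amgm[OF T, of "cmod (\<psi> b)" "cmod (\<phi> b)"] unfolding P_def F_def by simp
    also have "(T * P b + F b / T) / 2 = G b"
      unfolding G_def G0_def T_def by (auto simp: algebra_simps)
    finally show "\<bar>Rf \<psi> \<phi> b\<bar> \<le> G b" .
  qed
  also have "\<dots> = (s + (t - s) * a + 1/s + (1/t - 1/s) * a') / 2" by (rule Gv)
  also have "\<dots> \<le> (s + (t - s) * (1 - \<epsilon>) + 1/s + (1/t - 1/s) * \<epsilon>) / 2"
  proof -
    have a1: "a \<ge> 1 - \<epsilon>" using pa unfolding a_def P_def .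
    have a2: "a' \<le> \<epsilon>"
    proof -
      have "infsum F (A \<union> B) = a' + infsum F B"
        unfolding a'_def by (rule infsum_Un_disjoint) (use Fs AB in auto)
      moreover have "infsum F (A \<union> B) \<le> infsum F UNIV"
        by (rule infsum_mono_neutral) (use Fs in \<open>auto simp: F_def\<close>)
      ultimately show ?thesis using pb nF unfolding F_def by linarith
    qed
    have "(t - s) * a \<le> (t - s) * (1 - \<epsilon>)"
      using a1 ts by (intro mult_left_mono_neg) auto
    moreover have "(1/t - 1/s) * a' \<le> (1/t - 1/s) * \<epsilon>"
      using a2 ts t by (intro mult_left_mono) (auto simp: field_simps)
    ultimately show ?thesis using ts by (intro divide_right_mono add_mono) auto
  qed
  also have "\<dots> = \<epsilon> / t + t * (1 - \<epsilon>)"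
    unfolding s_def using t by (simp add: field_simps)
  finally show ?thesis .
qed

lemma final_bound:
  assumes l: "\<psi> \<in> l2" "\<phi> \<in> l2" and n: "nsq \<psi> = 1" "nsq \<phi> = 1" and AB: "A \<inter> B = {}"
    and pa: "infsum (\<lambda>b. (cmod (\<psi> b))\<^sup>2) A \<ge> 1 - \<epsilon>"
    and pb: "infsum (\<lambda>b. (cmod (\<phi> b))\<^sup>2) B \<ge> 1 - \<epsilon>"
    and e: "0 \<le> \<epsilon>" "\<epsilon> < 1/2"
  shows "\<bar>rip \<psi> \<phi>\<bar> \<le> 2 * sqrt (\<epsilon> * (1 - \<epsilon>))"
proof (cases "\<epsilon> = 0")
  case True
  show ?thesis
  proof (rule ccontr)
    assume "\<not> ?thesis"
    then have r: "\<bar>rip \<psi> \<phi>\<bar> > 0" using True by simp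
    define t where "t = min (\<bar>rip \<psi> \<phi>\<bar> / 2) 1"
    have "\<bar>rip \<psi> \<phi>\<bar> \<le> \<epsilon> / t + t * (1 - \<epsilon>)"
      by (rule final_bound_t[OF l n AB pa pb e(1)]) (use r in \<open>auto simp: t_def\<close>)
    then have "\<bar>rip \<psi> \<phi>\<bar> \<le> t" using True by simp
    then show False using r unfolding t_def by linarith
  qed
next
  case False
  then have ep: "\<epsilon> > 0" using e by simp
  define u where "u = sqrt \<epsilon>"
  define v where "v = sqrt (1 - \<epsilon>)"
  have uv: "u > 0" "v > 0" "u \<le> v" "u^2 = \<epsilon>" "v^2 = 1 - \<epsilon>"
    unfolding u_def v_def using ep e by auto
  have "\<bar>rip \<psi> \<phi>\<bar> \<le> \<epsilon> / (u / v) + (u / v) * (1 - \<epsilon>)"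
    by (rule final_bound_t[OF l n AB pa pb e(1)]) (use uv in auto)
  also have "\<dots> = u^2 / (u / v) + (u / v) * v^2" using uv by simp
  also have "\<dots> = 2 * (u * v)" using uv by (simp add: field_simps power2_eq_square)
  also have "u * v = sqrt (\<epsilon> * (1 - \<epsilon>))" unfolding u_def v_def by (simp add: real_sqrt_mult)
  finally show ?thesis .
qed

lemma S_eq: "(\<Sum>i<N. \<Sum>j\<in>{i<..<N}. 1 / (real j - real i)) = real N * (\<Sum>k=1..N. 1 / real k) - real N"
proof (induction N)
  case 0 then show ?case by simp
next
  case (Suc N)
  have a: "(\<Sum>j\<in>{i<..<Suc N}. 1 / (real j - real i)) = (\<Sum>j\<in>{i<..<N}. 1 / (real j - real i)) + 1 / (real N - real i)"
    if "i < N" for i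
  proof -
    have "{i<..<Suc N} = insert N {i<..<N}" using that by auto
    then show ?thesis by simp
  qed
  have b: "(\<Sum>i<N. 1 / (real N - real i)) = (\<Sum>k=1..N. 1 / real k)"
    by (rule sum.reindex_bij_witness[where i = "\<lambda>k. N - k" and j = "\<lambda>i. N - i"]) (auto simp: of_nat_diff)
  have "(\<Sum>i<Suc N. \<Sum>j\<in>{i<..<Suc N}. 1 / (real j - real i))
      = (\<Sum>i<N. \<Sum>j\<in>{i<..<Suc N}. 1 / (real j - real i))"
  proof -
    have "{N<..<Suc N} = {}" by auto
    then show ?thesis by simp
  qed
  also have "\<dots> = (\<Sum>i<N. (\<Sum>j\<in>{i<..<N}. 1 / (real j - real i)) + 1 / (real N - real i))"
    using a by simp
  also have "\<dots> = real N * (\<Sum>k=1..N. 1 / real k) - real N + (\<Sum>k=1..N. 1 / real k)"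
    by (simp add: sum.distrib Suc b)
  also have "\<dots> = real (Suc N) * (\<Sum>k=1..Suc N. 1 / real k) - real (Suc N)"
    by (simp add: algebra_simps)
  finally show ?case .
qed



lemma inp_ordered: "i < N \<Longrightarrow> inp i \<in> ordered_inputs N"
  unfolding ordered_inputs_def inp_def by auto

lemma inp_search: "i < N \<Longrightarrow> ordered_search N (inp i) = i"
  unfolding ordered_search_def inp_def by (rule Least_equality) auto

lemma final_st: "final_state U T N (inp i) = st U N i T"
  unfolding final_state_def st_def ..

theorem theorem1:
  fixes N T :: nat and \<epsilon> :: real
    and U :: "qstate \<Rightarrow> qstate" and out :: "nat \<times> nat \<Rightarrow> nat"
  assumes "N \<ge> 1" and "0 \<le> \<epsilon>" and "\<epsilon> < 1/2"
    and "is_unitary U"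
    and "\<forall>x\<in>ordered_inputs N. output_prob U out T N x (ordered_search N x) \<ge> 1 - \<epsilon>"
  shows "real T \<ge> (1 - 2 * sqrt (\<epsilon> * (1 - \<epsilon>))) * (1 / pi) * ((\<Sum>k=1..N. 1 / real k) - 1)
    \<and> (\<epsilon> = 0 \<longrightarrow> real T > (1 / pi) * (ln (real N) - 1))"
proof -
  note U = assms(4)
  define c where "c = 2 * sqrt (\<epsilon> * (1 - \<epsilon>))"
  define H where "H = (\<Sum>k=1..N. 1 / real k)"
  define S where "S = (\<Sum>i<N. \<Sum>j\<in>{i<..<N}. 1 / (real j - real i))"
  have S: "S = real N * H - real N" unfolding S_def H_def by (rule S_eq)
  have prob: "infsum (\<lambda>b. (cmod (st U N i T b))\<^sup>2) {b. out b = i} \<ge> 1 - \<epsilon>" if "i < N" for i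
  proof -
    have "1 - \<epsilon> \<le> output_prob U out T N (inp i) (ordered_search N (inp i))"
      using assms(5) inp_ordered[OF that] by blast
    then show ?thesis unfolding output_prob_def final_st inp_search[OF that] .
  qed
  have stl: "st U N i t \<in> l2" "nsq (st U N i t) = 1" for i t using st_l2[OF U] by auto
  have ripT: "\<bar>rip (st U N i T) (st U N j T)\<bar> \<le> c" if "i < N" "j < N" "i \<noteq> j" for i j
    unfolding c_def
    by (rule final_bound[OF stl(1) stl(1) stl(2) stl(2) _ prob prob assms(2,3)]) (use that in auto)
  have W0: "W U N 0 = S"
    unfolding W_def S_def st_0 rip_self using U init_l2 init_nsq by (simp add: unitary_nsq)
  have WT: "W U N T \<le> c * S"
  proof -
    have "W U N T \<le> (\<Sum>i<N. \<Sum>j\<in>{i<..<N}. c * (1 / (real j - real i)))"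
      unfolding W_def
    proof (intro sum_mono)
      fix i j assume i: "i \<in> {..<N}" and j: "j \<in> {i<..<N}"
      have "rip (st U N i T) (st U N j T) \<le> c" using ripT[of i j] i j by auto
      then show "rip (st U N i T) (st U N j T) / (real j - real i) \<le> c * (1 / (real j - real i))"
        using j by (simp add: divide_right_mono)
    qed
    also have "\<dots> = c * S" unfolding S_def by (simp add: sum_distrib_left)
    finally show ?thesis .
  qed
  have Wt: "W U N 0 - W U N t \<le> real t * (pi * real N)" for t
  proof (induction t)
    case 0 then show ?case by simp
  next
    case (Suc t)
    have "\<bar>W U N (Suc t) - W U N t\<bar> \<le> pi * real N" by (rule W_step[OF U])
    then show ?case using Suc by (simp add: algebra_simps)
  qed
  have key: "(1 - c) * (real N * (H - 1)) \<le> real T * pi * real N"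
    using W0 WT Wt[of T] S by (simp add: algebra_simps)
  have Npos: "real N > 0" using assms(1) by simp
  have key2: "(1 - c) * (H - 1) \<le> real T * pi"
    using key Npos by (simp add: mult.commute mult.left_commute[of "real N"])
  have part1: "(1 - c) * (1 / pi) * (H - 1) \<le> real T"
    using key2 pi_gt_zero by (simp add: field_simps)
  have part2: "real T > (1 / pi) * (ln (real N) - 1)" if "\<epsilon> = 0"
  proof -
    have c0: "c = 0" unfolding c_def using that by simp
    have "harm N = H" unfolding harm_def H_def by (simp add: inverse_eq_divide)
    then have "ln (real N + 1) \<le> H" using harm_ge_ln[of N] by simp
    moreover have "ln (real N) < ln (real N + 1)" using Npos by simp
    ultimately have "ln (real N) - 1 < H - 1" by simp
    then have "(1 / pi) * (ln (real N) - 1) < (1 / pi) * (H - 1)"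
      by (intro mult_strict_left_mono) auto
    also have "\<dots> \<le> real T" using part1 c0 by simp
    finally show ?thesis .
  qed
  show ?thesis using part1 part2 unfolding c_def H_def by blast
qed


end
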